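(* Let $n\ge2$, $1\le k\le n-1$, $\alpha_1,\alpha_2\in\mathbb{R}$ with $\alpha_1+\alpha_2>k-n$, $1\le p<\frac{\alpha_1+\alpha_2+n-1}{k-1}$ (read as $+\infty$ if $k=1$), $1\le r<\infty$, and $\beta_1,\beta_2\in\mathbb{R}$ with $$\frac{\beta_2+k-1}{r}-\frac{\alpha_2-1}{p}\le\frac{\alpha_1+n}{p}-\frac{\beta_1+n-k}{r}=k.$$ If $R_k$ is bounded from $L^p_{\alpha_1,\alpha_2}(\mathbb{H}^n)$ to $L^r_{\beta_1,\beta_2}(\Xi_k(\mathbb{H}^n))$, then $r\ge p$.
   Context: $\mathbb{H}^n$ real hyperbolic space of curvature $-1$ (Poincaré ball model), origin $0$, distance $d$, volume $dx$. $\Xi_k(\mathbb{H}^n)$: $k$-dimensional totally geodesic submanifolds, $d(0,\xi)=\inf_{x\in\xi}d(0,x)$, with isometry-invariant measure $d\xi$ such that for $\varphi(\xi)=\tilde\varphi(d(0,\xi))$, $\int\varphi\,d\xi=c_{n,k}\int_0^\infty\tilde\varphi(h)\cosh^kh\sinh^{n-k-1}h\,dh$. $R_kf(\xi)=\int_\xi f\,d_\xi x$. $\|f\|^p_{L^p_{\alpha_1,\alpha_2}(\mathbb{H}^n)}=\int|f|^p\sinh^{\alpha_1}d(0,x)\cosh^{\alpha_2}d(0,x)dx$; $\|\varphi\|^r_{L^r_{\beta_1,\beta_2}(\Xi_k)}=\int|\varphi(\xi)|^r\sinh^{\beta_1}d(0,\xi)\cosh^{\beta_2}d(0,\xi)d\xi$.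 *)

theory Defs
  imports "HOL-Analysis.Analysis"
begin

text \<open>Points of H^n are the x :: real^'n with norm x < 1, n = CARD('n).\<close>

definition hball :: "(real^'n) set" where
  "hball = {x. norm x < 1}"

definition hdist :: "real^'n \<Rightarrow> real^'n \<Rightarrow> real" where
  "hdist x y = arcosh (1 + 2 * (norm (x - y))\<^sup>2 / ((1 - (norm x)\<^sup>2) * (1 - (norm y)\<^sup>2)))"

text \<open>Riemannian volume density w.r.t. Lebesgue measure.\<close>
definition hvol_density :: "real^'n \<Rightarrow> real" where
  "hvol_density x = (2 / (1 - (norm x)\<^sup>2)) ^ CARD('n)"

text \<open>p-th power of the weighted norm in L^p_{a1,a2}(H^n) (nonnegative extended real).\<close>
definition Lp_weighted_pow :: "real \<Rightarrow> real \<Rightarrow> real \<Rightarrow> (real^'n \<Rightarrow> real) \<Rightarrow> ennreal" where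
  "Lp_weighted_pow p a1 a2 f =
     (\<integral>\<^sup>+ x. indicator hball x * ennreal (\<bar>f x\<bar> powr p
         * sinh (hdist 0 x) powr a1 * cosh (hdist 0 x) powr a2 * hvol_density x) \<partial>lborel)"

definition epow :: "ennreal \<Rightarrow> real \<Rightarrow> ennreal" where
  "epow x a = (if x = \<infinity> then \<infinity> else ennreal (enn2real x powr a))"

text \<open>A k-dimensional totally geodesic submanifold xi is described by parameters
  (h, g0, G) :: real \<times> (real^'n) \<times> (real^'n^'k):
  h = d(0,xi) > 0, u = g0/|g0| is the direction from 0 to the foot point of xi,
  and the rows w_i = G$i - (G$i . u) u (projections onto u-perp) span the
  k-dimensional subspace of directions of xi at its foot point.  In the hyperboloid
  model, xi = H \<inter> span{(sinh h u, cosh h), (w_i, 0)}.\<close>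

definition xi_dir :: "real^'n \<Rightarrow> real^'n" where
  "xi_dir g0 = g0 /\<^sub>R norm g0"

definition xi_frame :: "real^'n \<Rightarrow> real^'n^'k \<Rightarrow> 'k \<Rightarrow> real^'n" where
  "xi_frame g0 G i = G $ i - (G $ i \<bullet> xi_dir g0) *\<^sub>R xi_dir g0"

definition xi_lin :: "real^'n \<Rightarrow> real^'n^'k \<Rightarrow> real^'k \<Rightarrow> real^'n" where
  "xi_lin g0 G z = (\<Sum>i\<in>UNIV. z $ i *\<^sub>R xi_frame g0 G i)"

text \<open>Parametrisation of xi by z :: real^'k: hyperboloid point
  (L z + T sinh h u, T cosh h), T = sqrt(1 + |L z|^2), mapped to the Poincare ball.\<close>
definition xi_point :: "real \<Rightarrow> real^'n \<Rightarrow> real^'n^'k \<Rightarrow> real^'k \<Rightarrow> real^'n" where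
  "xi_point h g0 G z =
     (let T = sqrt (1 + (norm (xi_lin g0 G z))\<^sup>2)
      in (xi_lin g0 G z + (T * sinh h) *\<^sub>R xi_dir g0) /\<^sub>R (1 + T * cosh h))"

definition xi_gram :: "real^'n \<Rightarrow> real^'n^'k \<Rightarrow> real^'k^'k" where
  "xi_gram g0 G = (\<chi> i j. xi_frame g0 G i \<bullet> xi_frame g0 G j)"

text \<open>Totally geodesic Radon transform (for nonnegative f):
  R_k f(xi) = integral over xi of f w.r.t. the induced hyperbolic k-volume,
  which in the parameter z has density sqrt(det Gram) / sqrt(1 + |L z|^2).\<close>
definition Radon_k :: "(real^'n \<Rightarrow> real) \<Rightarrow> real \<Rightarrow> real^'n \<Rightarrow> real^'n^'k \<Rightarrow> ennreal" where
  "Radon_k f h g0 G =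
     (\<integral>\<^sup>+ (z::real^'k). ennreal (f (xi_point h g0 G z) * sqrt (det (xi_gram g0 G))
          / sqrt (1 + (norm (xi_lin g0 G z))\<^sup>2)) \<partial>lborel)"

text \<open>Isometry-invariant measure d xi on Xi_k (up to a positive constant factor):
  density c cosh^k h sinh^(n-k-1) h in h, u uniform on the sphere, the direction
  space uniform in the Grassmannian of u-perp (realised with Gaussian vectors).\<close>
definition Xi_density :: "'k itself \<Rightarrow> real \<times> (real^'n) \<times> (real^'n^'k) \<Rightarrow> real" where
  "Xi_density _ = (\<lambda>(h, g0, G). (if h > 0 then 1 else 0)
      * cosh h ^ CARD('k) * sinh h ^ (CARD('n) - CARD('k) - 1)
      * exp (- (norm g0)\<^sup>2 / 2) * exp (- (norm G)\<^sup>2 / 2))"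

text \<open>r-th power of the weighted norm in L^r_{b1,b2}(Xi_k(H^n)) of a nonnegative
  function phi on Xi_k, given in the parameters (h, g0, G) (d(0,xi) = h).\<close>
definition Xi_weighted_pow ::
  "real \<Rightarrow> real \<Rightarrow> real \<Rightarrow> (real \<Rightarrow> real^'n \<Rightarrow> real^'n^'k \<Rightarrow> ennreal) \<Rightarrow> ennreal" where
  "Xi_weighted_pow r b1 b2 phi =
     (\<integral>\<^sup>+ (\<xi> :: real \<times> (real^'n) \<times> (real^'n^'k)).
        (case \<xi> of (h, g0, G) \<Rightarrow>
          epow (phi h g0 G) r * ennreal (sinh h powr b1 * cosh h powr b2
             * Xi_density TYPE('k) (h, g0, G))) \<partial>lborel)"

text \<open>Boundedness of R_k : L^p_{a1,a2}(H^n) \<rightarrow> L^r_{b1,b2}(Xi_k(H^n)).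
  Since |R_k f| \<le> R_k |f|, it suffices (and is equivalent) to require the
  estimate for nonnegative measurable f.\<close>
definition Radon_bounded ::
  "'k::finite itself \<Rightarrow> 'n::finite itself \<Rightarrow> real \<Rightarrow> real \<Rightarrow> real \<Rightarrow> real \<Rightarrow> real \<Rightarrow> real \<Rightarrow> bool" where
  "Radon_bounded _ _ p a1 a2 r b1 b2 \<longleftrightarrow>
     (\<exists>C>0. \<forall>f :: real^'n \<Rightarrow> real. f \<in> borel_measurable borel \<longrightarrow> (\<forall>x. f x \<ge> 0) \<longrightarrow>
        epow (Xi_weighted_pow r b1 b2 (\<lambda>h g0 (G :: real^'n^'k). Radon_k f h g0 G)) (1 / r)
          \<le> ennreal C * epow (Lp_weighted_pow p a1 a2 f) (1 / p))"

end

theory Submission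
  imports Defs
begin

lemma powr_between_le:
  fixes u v w a :: real
  assumes "0 < u" "u \<le> v" "v \<le> w"
  shows "v powr a \<le> u powr a + w powr a"
proof (cases "a \<ge> 0")
  case True
  then have "v powr a \<le> w powr a" using assms by (intro powr_mono2) auto
  then show ?thesis using powr_ge_zero[of u a] by linarith
next
  case False
  then have "v powr a \<le> u powr a" using assms by (intro powr_mono2') auto
  then show ?thesis using powr_ge_zero[of w a] by linarith
qed

lemma powr_between_ge:
  fixes u v w a :: real
  assumes "0 < u" "u \<le> v" "v \<le> w"
  shows "min (u powr a) (w powr a) \<le> v powr a"
proof (cases "a \<ge> 0")
  case True
  then have "u powr a \<le> v powr a" using assms by (intro powr_mono2) auto
  then show ?thesis by simp
next
  case False
  then have "w powr a \<le> v powr a" using assms by (intro powr_mono2') auto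
  then show ?thesis by simp
qed

lemma exp_neg_upper:
  fixes h :: real assumes "0 \<le> h" shows "exp (-h) \<le> 1 - h + h\<^sup>2/2"
proof -
  have e: "1 + h + h\<^sup>2/2 \<le> exp h" by (rule exp_lower_Taylor_quadratic) fact
  have "(1 - h + h\<^sup>2/2) * (1 + h + h\<^sup>2/2) = 1 + h^4/4" by (simp add: algebra_simps power2_eq_square power4_eq_xxxx)
  also have "\<dots> \<ge> 1" by simp
  finally have 1: "1 \<le> (1 - h + h\<^sup>2/2) * (1 + h + h\<^sup>2/2)" .
  have pos: "0 \<le> 1 - h + h\<^sup>2/2"
  proof -
    have "0 \<le> (h - 1)\<^sup>2 / 2 + 1/2" by simp
    also have "\<dots> = 1 - h + h\<^sup>2/2" by (simp add: power2_eq_square field_simps)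
    finally show ?thesis .
  qed
  have "(1 - h + h\<^sup>2/2) * (1 + h + h\<^sup>2/2) \<le> (1 - h + h\<^sup>2/2) * exp h"
    by (rule mult_left_mono[OF e pos])
  with 1 have "1 \<le> (1 - h + h\<^sup>2/2) * exp h" by linarith
  then show ?thesis by (simp add: exp_minus field_simps)
qed

lemma sinh_cosh_small:
  fixes h :: real assumes "0 \<le> h" "h \<le> 1"
  shows "h \<le> sinh h" "sinh h \<le> 2*h" "1 + h\<^sup>2/4 \<le> cosh h" "cosh h \<le> 1 + h\<^sup>2" "cosh h \<le> 2"
proof -
  have a: "1 + h + h\<^sup>2/2 \<le> exp h" by (rule exp_lower_Taylor_quadratic) fact
  have b: "exp h \<le> 1 + h + h\<^sup>2" by (rule exp_bound) fact+
  have c: "1 - h \<le> exp (-h)" using exp_ge_add_one_self[of "-h"] by simp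
  have d: "exp (-h) \<le> 1 - h + h\<^sup>2/2" by (rule exp_neg_upper) fact
  have hh: "h\<^sup>2 \<le> h" using assms by (simp add: power2_eq_square mult_left_le)
  show "h \<le> sinh h" using a d by (simp add: sinh_def)
  have "sinh h = (exp h - exp (-h))/2" by (simp add: sinh_def)
  moreover have "exp h - exp (-h) \<le> 3*h" using b c hh by linarith
  ultimately show "sinh h \<le> 2*h" using assms by (simp add: field_simps)
  show "1 + h\<^sup>2/4 \<le> cosh h" using a c by (simp add: cosh_def)
  have ce: "cosh h = (exp h + exp (-h))/2" by (simp add: cosh_def)
  have gen: "(A + B)/2 \<le> 1 + h\<^sup>2" if "A \<le> 1 + h + h\<^sup>2" "B \<le> 1 - h + h\<^sup>2/2" for A B :: real
    using that zero_le_power2[of h] by argo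
  show "cosh h \<le> 1 + h\<^sup>2" unfolding ce by (rule gen[OF b d])
  then show "cosh h \<le> 2" using hh assms by simp
qed

lemma xi_dir_norm: "g0 \<noteq> 0 \<Longrightarrow> norm (xi_dir g0) = 1"
  by (simp add: xi_dir_def)

lemma xi_dir_inner_self: "g0 \<noteq> 0 \<Longrightarrow> xi_dir g0 \<bullet> xi_dir g0 = 1"
  using xi_dir_norm[of g0] by (simp add: power2_norm_eq_inner[symmetric])

lemma xi_frame_orth: "g0 \<noteq> 0 \<Longrightarrow> xi_frame g0 G i \<bullet> xi_dir g0 = 0"
  by (simp add: xi_frame_def inner_diff_left xi_dir_inner_self)

lemma xi_lin_orth: assumes "g0 \<noteq> 0" shows "xi_lin g0 G z \<bullet> xi_dir g0 = 0"
  unfolding xi_lin_def inner_sum_left by (simp add: xi_frame_orth[OF assms])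

lemma xi_frame_norm_le: "norm (xi_frame g0 G i) \<le> norm (G $ i)"
proof (cases "g0 = 0")
  case True
  then show ?thesis by (simp add: xi_frame_def xi_dir_def)
next
  case False
  let ?u = "xi_dir g0"
  have eq: "G $ i = xi_frame g0 G i + (G $ i \<bullet> ?u) *\<^sub>R ?u"
    by (simp add: xi_frame_def)
  have "orthogonal (xi_frame g0 G i) ((G $ i \<bullet> ?u) *\<^sub>R ?u)"
    unfolding orthogonal_def inner_scaleR_right xi_frame_orth[OF False] by simp
  then have "(norm (G $ i))\<^sup>2 = (norm (xi_frame g0 G i))\<^sup>2 + (norm ((G $ i \<bullet> ?u) *\<^sub>R ?u))\<^sup>2"
    by (subst eq, rule norm_add_Pythagorean)
  then have "(norm (xi_frame g0 G i))\<^sup>2 \<le> (norm (G $ i))\<^sup>2" by simp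
  then show ?thesis by (rule power2_le_imp_le) simp
qed

lemma xi_lin_norm_le:
  assumes "\<And>i. \<bar>z $ i\<bar> \<le> d"
  shows "norm (xi_lin g0 G z) \<le> real CARD('k) * d * norm (G :: real^'n^'k)"
proof -
  have "norm (xi_lin g0 G z) \<le> (\<Sum>i\<in>UNIV. norm (z $ i *\<^sub>R xi_frame g0 G i))"
    unfolding xi_lin_def by (rule norm_sum)
  also have "\<dots> \<le> (\<Sum>i\<in>(UNIV::'k set). d * norm G)"
  proof (rule sum_mono)
    fix i
    have "norm (xi_frame g0 G i) \<le> norm G" using xi_frame_norm_le[of g0 G i] Finite_Cartesian_Product.norm_nth_le[of G i] by linarith
    then show "norm (z $ i *\<^sub>R xi_frame g0 G i) \<le> d * norm G"
      using assms[of i] by (simp add: mult_mono)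
  qed
  also have "\<dots> = real CARD('k) * d * norm G" by simp
  finally show ?thesis .
qed

lemma norm_scaleR_div: "0 < (c::real) \<Longrightarrow> norm (v /\<^sub>R c) = norm v / c"
  by (simp add: divide_inverse_commute)

lemma xi_point_norm2:
  assumes "g0 \<noteq> 0"
  shows "(norm (xi_point h g0 G z))\<^sup>2 =
     (sqrt (1 + (norm (xi_lin g0 G z))\<^sup>2) * cosh h - 1) / (sqrt (1 + (norm (xi_lin g0 G z))\<^sup>2) * cosh h + 1)"
proof -
  define w where "w = xi_lin g0 G z"
  define u where "u = xi_dir g0"
  define T where "T = sqrt (1 + (norm w)\<^sup>2)"
  define X where "X = T * cosh h"
  have wu: "w \<bullet> u = 0" using xi_lin_orth[OF assms] by (simp add: w_def u_def)
  have wu': "u \<bullet> w = 0" using wu by (simp add: inner_commute)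
  have uu: "u \<bullet> u = 1" using xi_dir_inner_self[OF assms] by (simp add: u_def)
  have T2: "T\<^sup>2 = 1 + (norm w)\<^sup>2" by (simp add: T_def)
  have T1: "T \<ge> 1" by (simp add: T_def)
  have X1: "X \<ge> 1" using T1 cosh_real_ge_1[of h] mult_mono[of 1 T 1 "cosh h"] by (simp add: X_def)
  have "(norm (w + (T * sinh h) *\<^sub>R u))\<^sup>2 = (norm w)\<^sup>2 + (T * sinh h)\<^sup>2"
    unfolding power2_norm_eq_inner by (simp add: inner_add_left inner_add_right wu wu' uu power2_eq_square)
  also have "\<dots> = X\<^sup>2 - 1"
    using T2 cosh_square_eq[of h] by (simp add: X_def power_mult_distrib algebra_simps)
  finally have v2: "(norm (w + (T * sinh h) *\<^sub>R u))\<^sup>2 = X\<^sup>2 - 1" .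
  have xp: "xi_point h g0 G z = (w + (T * sinh h) *\<^sub>R u) /\<^sub>R (1 + X)"
    by (simp add: xi_point_def Let_def w_def u_def T_def X_def)
  have "norm (xi_point h g0 G z) = norm (w + (T * sinh h) *\<^sub>R u) / (1 + X)"
    unfolding xp using X1 by (intro norm_scaleR_div) simp
  then have "(norm (xi_point h g0 G z))\<^sup>2 = (X\<^sup>2 - 1) / (1 + X)\<^sup>2"
    using v2 by (simp add: power_divide)
  also have "\<dots> = ((X - 1) * (X + 1)) / ((X + 1) * (X + 1))"
    by (simp add: power2_eq_square algebra_simps)
  also have "\<dots> = (X - 1) / (X + 1)"
    using X1 by (intro mult_divide_mult_cancel_right) simp
  finally show ?thesis by (simp add: X_def T_def w_def)
qed

lemma xi_point_bounds:
  assumes g0: "g0 \<noteq> 0" and l0: "0 < l" and l1: "l \<le> 1/8"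
    and h1: "4*l \<le> h" and h2: "h \<le> 5*l" and w: "norm (xi_lin g0 G z) \<le> l"
  shows "l \<le> norm (xi_point h g0 G z)" "norm (xi_point h g0 G z) \<le> 4*l"
proof -
  define w where "w = xi_lin g0 G z"
  define T where "T = sqrt (1 + (norm w)\<^sup>2)"
  define X where "X = T * cosh h"
  define N where "N = norm (xi_point h g0 G z)"
  have N2: "N\<^sup>2 = (X - 1)/(X + 1)" using xi_point_norm2[OF g0] by (simp add: N_def X_def T_def w_def)
  have hpos: "0 \<le> h" "h \<le> 1" using h1 h2 l0 l1 by auto
  note sc = sinh_cosh_small[OF hpos]
  have T1: "T \<ge> 1" by (simp add: T_def)
  have w2: "(norm w)\<^sup>2 \<le> l\<^sup>2" unfolding w_def by (rule power_mono[OF w norm_ge_zero])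
  have e: "(1 + l\<^sup>2/2)\<^sup>2 = 1 + l\<^sup>2 + (l\<^sup>2 * l\<^sup>2)/4" by (simp add: power2_eq_square algebra_simps)
  have "(1 + (norm w)\<^sup>2) \<le> (1 + l\<^sup>2/2)\<^sup>2" unfolding e using w2 zero_le_power2[of l]
    mult_nonneg_nonneg[of "l\<^sup>2" "l\<^sup>2"] by argo
  then have "T \<le> sqrt ((1 + l\<^sup>2/2)\<^sup>2)" unfolding T_def by (rule real_sqrt_le_mono)
  then have T2: "T \<le> 1 + l\<^sup>2/2" by simp
  have hh1: "h\<^sup>2 \<ge> (4*l)\<^sup>2" using h1 l0 by (intro power_mono) auto
  have hh2: "h\<^sup>2 \<le> (5*l)\<^sup>2" using h2 hpos by (intro power_mono) auto
  have c1: "cosh h \<ge> 1 + 4 * l\<^sup>2" using sc(3) hh1 by (simp add: power_mult_distrib)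
  have c2: "cosh h \<le> 1 + 25 * l\<^sup>2" using sc(4) hh2 by (simp add: power_mult_distrib)
  have X1: "X \<ge> 1 + 4 * l\<^sup>2"
  proof -
    have "1 * (1 + 4 * l\<^sup>2) \<le> T * cosh h" using T1 c1 by (intro mult_mono) auto
    then show ?thesis by (simp add: X_def)
  qed
  have ll: "l\<^sup>2 \<le> (1/8)\<^sup>2" using l0 l1 by (intro power_mono) auto
  then have ll: "l\<^sup>2 \<le> 1/64" by (simp add: power2_eq_square)
  have X2: "X \<le> 1 + 26 * l\<^sup>2"
  proof -
    have "X \<le> (1 + l\<^sup>2/2) * (1 + 25 * l\<^sup>2)"
      unfolding X_def using T2 c2 T1 by (intro mult_mono) auto
    also have "\<dots> = 1 + 51/2 * l\<^sup>2 + 25/2 * (l\<^sup>2 * l\<^sup>2)" by (simp add: algebra_simps)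
    also have "\<dots> \<le> 1 + 51/2 * l\<^sup>2 + 25/2 * (l\<^sup>2 * (1/64))"
      using mult_left_mono[OF ll zero_le_power2[of l]] by simp
    also have "\<dots> \<le> 1 + 26 * l\<^sup>2" by simp
    finally show ?thesis .
  qed
  have Xp: "X + 1 > 0" using X1 zero_le_power2[of l] by argo
  have lo: "l\<^sup>2 \<le> N\<^sup>2"
  proof -
    have "l\<^sup>2 * (X + 1) \<le> X - 1"
    proof -
      have "l\<^sup>2 * (X + 1) \<le> l\<^sup>2 * (2 + 26 * (1/64))"
        using X2 ll by (intro mult_left_mono) auto
      also have "\<dots> \<le> 4 * l\<^sup>2" by simp
      finally show ?thesis using X1 by argo
    qed
    then show ?thesis using Xp by (simp add: N2 le_divide_eq)
  qed
  have up: "N\<^sup>2 \<le> (4*l)\<^sup>2"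
  proof -
    have "X - 1 \<le> (4*l)\<^sup>2 * (X + 1)"
    proof -
      have "X \<ge> 1" using X1 zero_le_power2[of l] by argo
      then have "(4*l)\<^sup>2 * 2 \<le> (4*l)\<^sup>2 * (X + 1)"
        by (intro mult_left_mono) auto
      moreover have "X - 1 \<le> (4*l)\<^sup>2 * 2"
      proof -
        have "(4*l)\<^sup>2 = 16 * l\<^sup>2" by (simp add: power_mult_distrib)
        then show ?thesis using X2 zero_le_power2[of l] by argo
      qed
      ultimately show ?thesis by argo
    qed
    then show ?thesis using Xp by (simp add: N2 divide_le_eq)
  qed
  have N0: "N \<ge> 0" by (simp add: N_def)
  show "l \<le> norm (xi_point h g0 G z)"
    using power2_le_imp_le[OF lo N0] by (simp add: N_def)
  show "norm (xi_point h g0 G z) \<le> 4*l"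
    using power2_le_imp_le[OF up] l0 by (simp add: N_def)
qed

lemma Basis_cart_inner:
  fixes v :: "real^'n"
  assumes "b \<in> Basis"
  obtains i where "v \<bullet> b = v $ i"
  using assms by (auto simp: Basis_vec_def inner_axis)

lemma emeasure_cube:
  fixes a :: real
  assumes "0 \<le> a"
  shows "emeasure lborel (cbox (\<chi> i::'n::finite. -a) (\<chi> i. a)) = ennreal ((2*a)^CARD('n))"
proof -
  have cond: "\<forall>b\<in>Basis. (\<chi> i::'n. -a) \<bullet> b \<le> (\<chi> i. a) \<bullet> b"
    using assms by (auto elim!: Basis_cart_inner[where v="\<chi> i::'n. -a"] Basis_cart_inner[where v="\<chi> i::'n. a"]
        simp: Basis_vec_def inner_axis)
  have pr: "(\<Prod>b\<in>(Basis::(real^'n) set). ((\<chi> i::'n. a) - (\<chi> i. -a)) \<bullet> b) = (\<Prod>b\<in>(Basis::(real^'n) set). 2*a)"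
    by (rule prod.cong) (auto simp: Basis_vec_def inner_axis)
  show ?thesis
    unfolding emeasure_lborel_cbox_eq using cond pr by simp
qed

lemma hdist0_eq: "hdist 0 x = arcosh (1 + 2 * (norm x)\<^sup>2 / (1 - (norm x)\<^sup>2))"
  by (simp add: hdist_def)

lemma hdist0_bounds:
  fixes x :: "real^'n::finite"
  assumes l0: "0 < l" and l1: "l \<le> 1/8" and t1: "l \<le> norm x" and t2: "norm x \<le> 4*l"
  shows "2*l \<le> sinh (hdist 0 x)" "sinh (hdist 0 x) \<le> 12*l"
        "1 \<le> cosh (hdist 0 x)" "cosh (hdist 0 x) \<le> 2"
        "hvol_density x \<le> 3^CARD('n)"
proof -
  define t where "t = norm x"
  define y where "y = 1 + 2 * t\<^sup>2 / (1 - t\<^sup>2)"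
  have hd: "hdist 0 x = arcosh y" by (simp add: hdist0_eq y_def t_def)
  have t0: "0 \<le> t" by (simp add: t_def)
  have th: "t \<le> 1/2" using t2 l1 by (simp add: t_def)
  have tt: "t\<^sup>2 \<le> (1/2)\<^sup>2" using th t0 by (intro power_mono) auto
  then have tt: "t\<^sup>2 \<le> 1/4" by (simp add: power2_eq_square)
  have lt: "l\<^sup>2 \<le> t\<^sup>2" using t1 l0 by (simp add: t_def power_mono)
  have lt2': "(norm x)\<^sup>2 \<le> (4*l)\<^sup>2" by (rule power_mono[OF t2 norm_ge_zero])
  have e16: "(4*l)\<^sup>2 = 16 * l\<^sup>2" by (simp add: power_mult_distrib)
  have lt2: "t\<^sup>2 \<le> 16 * l\<^sup>2" using lt2' e16 by (simp add: t_def)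
  have d0: "3/4 \<le> 1 - t\<^sup>2" using tt by simp
  have d1: "1 - t\<^sup>2 \<le> 1" by simp
  have ym1: "y - 1 = 2 * t\<^sup>2 / (1 - t\<^sup>2)" by (simp add: y_def)
  have "2 * t\<^sup>2 * (1 - t\<^sup>2) \<le> 2 * t\<^sup>2" using d1 by (intro mult_left_le) auto
  then have ya: "2 * t\<^sup>2 \<le> y - 1" unfolding ym1 using d0
    by (subst le_divide_eq) auto
  have m: "t\<^sup>2*(3/4) \<le> t\<^sup>2*(1 - t\<^sup>2)" by (intro mult_left_mono d0) simp
  have yb: "y - 1 \<le> 8/3 * t\<^sup>2" unfolding ym1 using d0 m
    by (subst divide_le_eq) auto
  have y1: "1 \<le> y" using ya zero_le_power2[of t] by argo
  have y2: "y \<le> 2" using yb tt by argo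
  have ch: "cosh (hdist 0 x) = y" using y1 by (simp add: hd)
  have sh: "sinh (hdist 0 x) = sqrt (y\<^sup>2 - 1)" using y1 by (simp add: hd sinh_arcosh_real)
  have yy: "y\<^sup>2 - 1 = (y - 1) * (y + 1)" by (simp add: power2_eq_square algebra_simps)
  have s1: "(2*l)\<^sup>2 \<le> y\<^sup>2 - 1"
  proof -
    have "(2*l)\<^sup>2 \<le> (2 * t\<^sup>2) * 2" using lt by (simp add: power_mult_distrib)
    also have "\<dots> \<le> (y - 1) * (y + 1)" by (rule mult_mono) (insert ya y1 zero_le_power2[of t], argo)+
    finally show ?thesis by (simp add: yy)
  qed
  have s2: "y\<^sup>2 - 1 \<le> (12*l)\<^sup>2"
  proof -
    have "(y - 1) * (y + 1) \<le> (8/3 * t\<^sup>2) * 3" by (rule mult_mono) (insert yb y2 y1 zero_le_power2[of t], argo)+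
    also have "\<dots> \<le> (12*l)\<^sup>2"
    proof -
      have "(12*l)\<^sup>2 = 144 * l\<^sup>2" by (simp add: power_mult_distrib)
      then show ?thesis using lt2 zero_le_power2[of l] by argo
    qed
    finally show ?thesis by (simp add: yy)
  qed
  show "2*l \<le> sinh (hdist 0 x)" unfolding sh by (rule real_le_rsqrt[OF s1])
  have "sqrt (y\<^sup>2 - 1) \<le> sqrt ((12*l)\<^sup>2)" by (rule real_sqrt_le_mono[OF s2])
  also have "sqrt ((12*l)\<^sup>2) = 12*l" using l0 by (subst real_sqrt_abs) simp
  finally show "sinh (hdist 0 x) \<le> 12*l" unfolding sh .
  show "1 \<le> cosh (hdist 0 x)" "cosh (hdist 0 x) \<le> 2" using y1 y2 ch by auto
  have "2 / (1 - (norm x)\<^sup>2) \<le> 3"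
    using d0 by (simp add: t_def divide_le_eq)
  moreover have "0 \<le> 2 / (1 - (norm x)\<^sup>2)" using d0 by (simp add: t_def)
  ultimately show "hvol_density x \<le> 3^CARD('n)"
    unfolding hvol_density_def by (intro power_mono) auto
qed

lemma weight_bound:
  fixes x :: "real^'n::finite"
  assumes l0: "0 < l" and l1: "l \<le> 1/8" and t1: "l \<le> norm x" and t2: "norm x \<le> 4*l"
  shows "sinh (hdist 0 x) powr a1 * cosh (hdist 0 x) powr a2 * hvol_density x
     \<le> ((2 powr a1 + 12 powr a1) * (1 + 2 powr a2) * 3^CARD('n)) * l powr a1"
proof -
  note hb = hdist0_bounds[OF assms]
  have "sinh (hdist 0 x) powr a1 \<le> (2*l) powr a1 + (12*l) powr a1"
    by (rule powr_between_le) (use hb l0 in auto)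
  also have "\<dots> = (2 powr a1 + 12 powr a1) * l powr a1" using l0 by (simp add: powr_mult algebra_simps)
  finally have A: "sinh (hdist 0 x) powr a1 \<le> (2 powr a1 + 12 powr a1) * l powr a1" .
  have "cosh (hdist 0 x) powr a2 \<le> 1 powr a2 + 2 powr a2"
    by (rule powr_between_le) (use hb in auto)
  then have B: "cosh (hdist 0 x) powr a2 \<le> 1 + 2 powr a2" by simp
  have C: "0 \<le> hvol_density x"
  proof -
    have "0 < 1 - (norm x)\<^sup>2"
    proof -
      have "norm x \<le> 1/2" using t2 l1 by simp
      then have "(norm x)\<^sup>2 \<le> (1/2)\<^sup>2" by (intro power_mono) auto
      then show ?thesis by (simp add: power2_eq_square)
    qed
    then show ?thesis by (simp add: hvol_density_def)
  qed
  have "sinh (hdist 0 x) powr a1 * cosh (hdist 0 x) powr a2 * hvol_density x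
     \<le> ((2 powr a1 + 12 powr a1) * l powr a1) * (1 + 2 powr a2) * 3^CARD('n)"
    using A B C hb(5) by (intro mult_mono) auto
  then show ?thesis by (simp add: algebra_simps)
qed

definition lam :: "nat \<Rightarrow> real" where "lam j = (1/8) * (1/5)^j"

definition ann :: "nat \<Rightarrow> (real^'n::finite) set" where
  "ann j = {x. lam j \<le> norm x \<and> norm x \<le> 4 * lam j}"

definition ftest :: "real \<Rightarrow> nat \<Rightarrow> real^'n::finite \<Rightarrow> real" where
  "ftest s N x = (\<Sum>j<N. lam j powr (-s) * indicator (ann j) x)"

lemma lam_pos: "0 < lam j" by (simp add: lam_def)

lemma lam_le: "lam j \<le> 1/8"
  by (simp add: lam_def power_le_one)

lemma lam_antimono: "i \<le> j \<Longrightarrow> lam j \<le> lam i"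
  unfolding lam_def by (intro mult_left_mono power_decreasing) auto

lemma lam_Suc: "lam (Suc j) = lam j / 5" by (simp add: lam_def)

lemma lam_less: "i < j \<Longrightarrow> lam j \<le> lam i / 5"
  using lam_antimono[of "Suc i" j] lam_Suc[of i] by simp

lemma ann_disj: "x \<in> ann i \<Longrightarrow> x \<in> ann j \<Longrightarrow> i = j"
proof (rule ccontr)
  assume a: "x \<in> ann i" "x \<in> ann j" "i \<noteq> j"
  show False
  proof (cases "i < j")
    case True
    then have "lam j \<le> lam i / 5" by (rule lam_less)
    then show False using a lam_pos[of i] by (auto simp: ann_def)
  next
    case False
    then have "j < i" using a by simp
    then have "lam i \<le> lam j / 5" by (rule lam_less)
    then show False using a lam_pos[of j] by (auto simp: ann_def)
  qed
qed

lemma ftest_eq: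
  assumes "j < N" "x \<in> ann j"
  shows "ftest s N x = lam j powr (-s)"
proof -
  have "ftest s N x = (\<Sum>i<N. if i = j then lam j powr (-s) else 0)"
    unfolding ftest_def
  proof (rule sum.cong)
    fix i assume "i \<in> {..<N}"
    show "lam i powr (-s) * indicator (ann i) x = (if i = j then lam j powr (-s) else 0)"
    proof (cases "i = j")
      case True
      then show ?thesis using assms(2) by simp
    next
      case False
      then have "x \<notin> ann i" using assms(2) ann_disj by blast
      then show ?thesis using False by simp
    qed
  qed simp
  also have "\<dots> = lam j powr (-s)" using assms(1) by simp
  finally show ?thesis .
qed

lemma ftest_zero:
  assumes "\<forall>j<N. x \<notin> ann j"
  shows "ftest s N x = 0"
  unfolding ftest_def using assms by (intro sum.neutral) (auto simp: indicator_def)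

lemma ftest_nonneg: "0 \<le> ftest s N x"
  unfolding ftest_def by (intro sum_nonneg) auto

lemma closed_ann: "closed (ann j)"
  unfolding ann_def
  by (intro closed_Collect_conj closed_Collect_le continuous_on_const continuous_on_norm_id
      continuous_on_mult_left)

lemma ftest_measurable: "ftest s N \<in> borel_measurable borel"
  unfolding ftest_def
  by (intro borel_measurable_sum borel_measurable_times borel_measurable_const
      borel_measurable_indicator borel_closed closed_ann)

lemma ann_cube:
  assumes "x \<in> (ann j :: (real^'n::finite) set)"
  shows "x \<in> cbox (\<chi> i::'n. -(4 * lam j)) (\<chi> i. 4 * lam j)"
proof -
  have "-(4 * lam j) \<le> x $ i \<and> x $ i \<le> 4 * lam j" for i
  proof -
    have "\<bar>x $ i\<bar> \<le> 4 * lam j"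
      using assms component_le_norm_cart[of x i] by (simp add: ann_def)
    then show ?thesis by arith
  qed
  then show ?thesis by (simp add: mem_box_cart)
qed

lemma Lp_ftest:
  fixes a1 a2 p s :: real
  assumes p0: "0 < p" and sp: "s * p = a1 + real CARD('n::finite)"
  defines "K1 \<equiv> (2 powr a1 + 12 powr a1) * (1 + 2 powr a2) * 3^CARD('n)"
  shows "Lp_weighted_pow p a1 a2 (ftest s N :: real^'n \<Rightarrow> real) \<le> of_nat N * ennreal (K1 * 8^CARD('n))"
proof -
  define B :: "nat \<Rightarrow> (real^'n) set" where "B j = cbox (\<chi> i::'n. -(4 * lam j)) (\<chi> i. 4 * lam j)" for j
  define c where "c j = (lam j powr (-s)) powr p * (K1 * lam j powr a1)" for j
  have pw: "indicator hball x * ennreal (\<bar>ftest s N x\<bar> powr p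
         * sinh (hdist 0 x) powr a1 * cosh (hdist 0 x) powr a2 * hvol_density x)
       \<le> (\<Sum>j<N. ennreal (c j) * indicator (B j) x)" for x :: "real^'n"
  proof (cases "\<exists>j<N. x \<in> ann j")
    case True
    then obtain j where j: "j < N" "x \<in> ann j" by blast
    have f: "\<bar>ftest s N x\<bar> = lam j powr (-s)" using ftest_eq[OF j] by simp
    have nx: "lam j \<le> norm x" "norm x \<le> 4 * lam j" using j(2) by (auto simp: ann_def)
    have W: "sinh (hdist 0 x) powr a1 * cosh (hdist 0 x) powr a2 * hvol_density x \<le> K1 * lam j powr a1"
      unfolding K1_def by (rule weight_bound[OF lam_pos lam_le nx])
    have "\<bar>ftest s N x\<bar> powr p * sinh (hdist 0 x) powr a1 * cosh (hdist 0 x) powr a2 * hvol_density x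
        = (lam j powr (-s)) powr p * (sinh (hdist 0 x) powr a1 * cosh (hdist 0 x) powr a2 * hvol_density x)"
      by (simp add: f mult.assoc)
    also have "\<dots> \<le> c j" unfolding c_def by (intro mult_left_mono W) simp
    finally have le1: "\<bar>ftest s N x\<bar> powr p * sinh (hdist 0 x) powr a1 * cosh (hdist 0 x) powr a2 * hvol_density x \<le> c j" .
    have "indicator hball x * ennreal (\<bar>ftest s N x\<bar> powr p
         * sinh (hdist 0 x) powr a1 * cosh (hdist 0 x) powr a2 * hvol_density x) \<le> ennreal (c j)"
      using le1 by (auto simp: indicator_def intro: ennreal_leI)
    also have "\<dots> = ennreal (c j) * indicator (B j) x"
      using ann_cube[OF j(2)] by (simp add: B_def)
    also have "\<dots> \<le> (\<Sum>j<N. ennreal (c j) * indicator (B j) x)"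
      by (rule member_le_sum) (use j in auto)
    finally show ?thesis .
  next
    case False
    then have "ftest s N x = 0" by (intro ftest_zero) auto
    then show ?thesis using p0 by simp
  qed
  have "Lp_weighted_pow p a1 a2 (ftest s N :: real^'n \<Rightarrow> real) \<le> (\<integral>\<^sup>+ x. (\<Sum>j<N. ennreal (c j) * indicator (B j) x) \<partial>lborel)"
    unfolding Lp_weighted_pow_def by (rule nn_integral_mono) (rule pw)
  also have "\<dots> = (\<Sum>j<N. \<integral>\<^sup>+ x. ennreal (c j) * indicator (B j) x \<partial>lborel)"
    by (rule nn_integral_sum) (simp add: B_def)
  also have "\<dots> = (\<Sum>j<N. ennreal (c j) * emeasure lborel (B j))"
    by (intro sum.cong refl nn_integral_cmult_indicator) (simp add: B_def)
  also have "\<dots> = (\<Sum>j<N. ennreal (K1 * 8^CARD('n)))"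
  proof (rule sum.cong[OF refl])
    fix j
    have l: "0 < lam j" by (rule lam_pos)
    have em: "emeasure lborel (B j) = ennreal ((8 * lam j)^CARD('n))"
      unfolding B_def using emeasure_cube[of "4 * lam j", where 'n='n] l by simp
    have "c j * (8 * lam j)^CARD('n) = K1 * 8^CARD('n) * (lam j powr (-s * p) * lam j powr a1 * lam j powr (real CARD('n)))"
      using l by (simp add: c_def powr_powr power_mult_distrib powr_realpow algebra_simps)
    also have "lam j powr (-s * p) * lam j powr a1 * lam j powr (real CARD('n)) = 1"
      using sp l by (simp add: powr_add[symmetric])
    finally have cj: "c j * (8 * lam j)^CARD('n) = K1 * 8^CARD('n)" by simp
    have c0: "0 \<le> c j" unfolding c_def K1_def by simp
    have "ennreal (c j) * emeasure lborel (B j) = ennreal (c j * (8 * lam j)^CARD('n))"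
      unfolding em by (rule ennreal_mult[symmetric]) (use c0 l in auto)
    also have "\<dots> = ennreal (K1 * 8^CARD('n))" unfolding cj ..
    finally show "ennreal (c j) * emeasure lborel (B j) = ennreal (K1 * 8^CARD('n))" .
  qed
  also have "\<dots> = of_nat N * ennreal (K1 * 8^CARD('n))" by simp
  finally show ?thesis .
qed

lemma det_gram_eq:
  "det (xi_gram g0 (G :: real^'n::finite^'k::finite)) =
    (\<Sum>p\<in>{p. p permutes (UNIV::'k set)}. of_int (sign p) *
       (\<Prod>i\<in>UNIV. xi_frame g0 G i \<bullet> xi_frame g0 G (p i)))"
  by (simp add: det_def xi_gram_def)

lemma det_gram_cont:
  "continuous_on {q :: (real^'n::finite) \<times> (real^'n^'k::finite). fst q \<noteq> 0}
     (\<lambda>q. det (xi_gram (fst q) (snd q)))"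
  unfolding det_gram_eq xi_frame_def xi_dir_def
  by (intro continuous_intros) auto

lemma good_point:
  assumes "CARD('k::finite) < CARD('n::finite)"
  shows "\<exists>q :: (real^'n) \<times> (real^'n^'k). fst q \<noteq> 0 \<and> det (xi_gram (fst q) (snd q)) = 1"
proof -
  obtain a :: 'n where True by blast
  have "card (UNIV :: 'k set) \<le> card (UNIV - {a})" using assms by simp
  then obtain e :: "'k \<Rightarrow> 'n" where e: "e ` UNIV \<subseteq> UNIV - {a}" "inj_on e UNIV"
    using card_le_inj[of "UNIV :: 'k set" "UNIV - {a}"] by auto
  define g0 :: "real^'n" where "g0 = axis a 1"
  define G :: "real^'n^'k" where "G = (\<chi> i. axis (e i) 1)"
  have g0: "g0 \<noteq> 0" by (simp add: g0_def axis_eq_0_iff)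
  have dir: "xi_dir g0 = axis a 1" by (simp add: xi_dir_def g0_def)
  have fr: "xi_frame g0 G i = axis (e i) 1" for i
  proof -
    have "e i \<noteq> a" using e(1) by auto
    then show ?thesis by (simp add: xi_frame_def dir G_def inner_axis_axis)
  qed
  have "xi_gram g0 G = mat 1"
    using e(2) by (auto simp: xi_gram_def fr inner_axis_axis mat_def vec_eq_iff inj_on_def)
  then have "det (xi_gram g0 G) = 1" by simp
  then show ?thesis using g0 by (intro exI[of _ "(g0, G)"]) simp
qed

lemma good_box:
  assumes "CARD('k::finite) < CARD('n::finite)"
  obtains a b :: "(real^'n) \<times> (real^'n^'k)" and B :: real
  where "box a b \<noteq> {}" "B \<ge> 1"
    "\<And>q. q \<in> box a b \<Longrightarrow> fst q \<noteq> 0 \<and> 1/2 \<le> det (xi_gram (fst q) (snd q)) \<and> norm (fst q) \<le> B \<and> norm (snd q) \<le> B"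
proof -
  obtain q0 :: "(real^'n) \<times> (real^'n^'k)" where q0: "fst q0 \<noteq> 0" "det (xi_gram (fst q0) (snd q0)) = 1"
    using good_point[OF assms] by blast
  define S where "S = {q :: (real^'n) \<times> (real^'n^'k). fst q \<noteq> 0}"
  have oS: "open S" unfolding S_def by (intro open_Collect_neq continuous_intros)
  define U where "U = (\<lambda>q. det (xi_gram (fst q) (snd q))) -` {1/2<..} \<inter> S"
  have oU: "open U"
    using det_gram_cont[where 'n='n and 'k='k] oS unfolding U_def S_def
    by (subst (asm) continuous_on_open_vimage) auto
  have "q0 \<in> U" using q0 by (simp add: U_def S_def)
  then obtain e where e: "e > 0" "ball q0 e \<subseteq> U" using oU openE by blast
  define e' where "e' = min e 1"
  have e': "e' > 0" using e by (simp add: e'_def)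
  obtain a b where ab: "q0 \<in> box a b" "box a b \<subseteq> ball q0 e'"
    using rational_boxes[OF e', of q0] by blast
  define B where "B = norm q0 + 1"
  show ?thesis
  proof
    show "box a b \<noteq> {}" using ab by auto
    show "1 \<le> B" by (simp add: B_def)
    fix q assume q: "q \<in> box a b"
    then have qb: "q \<in> ball q0 e'" using ab by auto
    then have "q \<in> U" using e by (auto simp: e'_def)
    then have A: "fst q \<noteq> 0 \<and> 1/2 \<le> det (xi_gram (fst q) (snd q))" by (auto simp: U_def S_def)
    have "norm q \<le> B"
      using qb norm_triangle_ineq2[of q q0] by (auto simp: B_def e'_def dist_norm norm_minus_commute)
    moreover have "norm (fst q) \<le> norm q" "norm (snd q) \<le> norm q"
      using norm_fst_le[of "fst q" "snd q"] norm_snd_le[of "snd q" "fst q"] by auto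
    ultimately show "fst q \<noteq> 0 \<and> 1/2 \<le> det (xi_gram (fst q) (snd q)) \<and> norm (fst q) \<le> B \<and> norm (snd q) \<le> B"
      using A by auto
  qed
qed

lemma box_pos_measure:
  fixes a b :: "'a::euclidean_space"
  assumes "box a b \<noteq> {}"
  shows "0 < emeasure lborel (box a b)" "emeasure lborel (box a b) < \<infinity>"
proof -
  have "\<forall>i\<in>Basis. a \<bullet> i < b \<bullet> i" using assms box_ne_empty(2) by blast
  then show "0 < emeasure lborel (box a b)"
    by (auto simp: emeasure_lborel_box_eq inner_diff_left intro!: prod_pos)
  show "emeasure lborel (box a b) < \<infinity>" by (rule emeasure_lborel_box_finite)
qed

lemma emeasure_cube_k:
  fixes a :: real assumes "0 \<le> a"
  shows "emeasure lborel (cbox (\<chi> i::'k::finite. -a) (\<chi> i. a)) = ennreal ((2*a)^CARD('k))"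
  by (rule emeasure_cube[OF assms])

lemma R_lower:
  fixes G :: "real^'n::finite^'k::finite"
  assumes g0: "g0 \<noteq> 0" and dt: "1/2 \<le> det (xi_gram g0 G)" and nG: "norm G \<le> B" and B1: "1 \<le> B"
    and jN: "j < N" and h1: "4 * lam j \<le> h" and h2: "h \<le> 5 * lam j"
  shows "ennreal (lam j powr (-s) / 2 * (2 * (lam j / (real CARD('k) * B)))^CARD('k)) \<le> Radon_k (ftest s N) h g0 G"
proof -
  define l where "l = lam j"
  have l0: "0 < l" by (simp add: l_def lam_pos)
  have l1: "l \<le> 1/8" unfolding l_def by (rule lam_le)
  define d where "d = l / (real CARD('k) * B)"
  have d0: "0 < d" using l0 B1 by (simp add: d_def)
  define A where "A = lam j powr (-s)"
  have A0: "0 < A" using lam_pos[of j] by (simp add: A_def)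
  define C where "C = cbox (\<chi> i::'k. -d) (\<chi> i. d)"
  have pw: "ennreal (A/2) * indicator C z \<le> ennreal (ftest s N (xi_point h g0 G z) * sqrt (det (xi_gram g0 G))
          / sqrt (1 + (norm (xi_lin g0 G z))\<^sup>2))" for z
  proof (cases "z \<in> C")
    case True
    have zi: "\<bar>z $ i\<bar> \<le> d" for i
    proof -
      have "-d \<le> z $ i \<and> z $ i \<le> d" using True by (simp add: C_def mem_box_cart)
      then show ?thesis by arith
    qed
    have "norm (xi_lin g0 G z) \<le> real CARD('k) * d * norm G" by (rule xi_lin_norm_le[OF zi])
    also have "\<dots> \<le> real CARD('k) * d * B" using nG d0 by (intro mult_left_mono) auto
    also have "\<dots> = l" using B1 by (simp add: d_def)
    finally have w: "norm (xi_lin g0 G z) \<le> l" .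
    have xb: "l \<le> norm (xi_point h g0 G z)" "norm (xi_point h g0 G z) \<le> 4*l"
      using xi_point_bounds[OF g0 l0 l1 _ _ w] h1 h2 by (auto simp: l_def)
    then have "xi_point h g0 G z \<in> ann j" by (simp add: ann_def l_def)
    then have f: "ftest s N (xi_point h g0 G z) = A" using ftest_eq[OF jN] by (simp add: A_def)
    define T where "T = sqrt (1 + (norm (xi_lin g0 G z))\<^sup>2)"
    have T0: "0 < T" by (simp add: T_def add_pos_nonneg)
    have "(norm (xi_lin g0 G z))\<^sup>2 \<le> 1"
      using w l1 l0 by (simp add: abs_square_le_1)
    then have "1 + (norm (xi_lin g0 G z))\<^sup>2 \<le> 4 * det (xi_gram g0 G)" using dt by simp
    then have "T \<le> sqrt (4 * det (xi_gram g0 G))" unfolding T_def by (rule real_sqrt_le_mono)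
    then have T2: "T \<le> 2 * sqrt (det (xi_gram g0 G))" by (simp add: real_sqrt_mult)
    have "A / 2 \<le> A * sqrt (det (xi_gram g0 G)) / T"
      using T0 T2 A0 by (simp add: field_simps)
    then show ?thesis using True f by (simp add: T_def ennreal_leI)
  next
    case False
    then show ?thesis by simp
  qed
  have "ennreal (A/2) * emeasure lborel C = (\<integral>\<^sup>+ z. ennreal (A/2) * indicator C z \<partial>lborel)"
    by (rule nn_integral_cmult_indicator[symmetric]) (simp add: C_def)
  also have "\<dots> \<le> Radon_k (ftest s N) h g0 G"
    unfolding Radon_k_def by (rule nn_integral_mono) (rule pw)
  finally have R: "ennreal (A/2) * emeasure lborel C \<le> Radon_k (ftest s N) h g0 G" .
  have em: "emeasure lborel C = ennreal ((2*d)^CARD('k))"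
    unfolding C_def using d0 by (intro emeasure_cube_k) simp
  have "ennreal (A/2) * emeasure lborel C = ennreal (A / 2 * (2 * d)^CARD('k))"
    unfolding em by (rule ennreal_mult[symmetric]) (use A0 d0 in auto)
  then show ?thesis using R by (simp add: A_def d_def l_def)
qed

lemma growth_contra:
  fixes r p c K C :: real
  assumes r0: "0 < r" and rp: "r < p" and c0: "0 < c" and K0: "0 < K" and C0: "0 < C"
    and H: "\<And>N::nat. N \<ge> 1 \<Longrightarrow> (real N * c) powr (1/r) \<le> C * (real N * K) powr (1/p)"
  shows False
proof -
  define d where "d = 1/r - 1/p"
  have p0: "0 < p" using r0 rp by simp
  have d0: "0 < d" unfolding d_def using r0 rp p0 by (simp add: frac_less2)
  define D where "D = C * K powr (1/p) / c powr (1/r)"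
  define x where "x = (D + 1) powr (1/d)"
  define N where "N = nat \<lceil>x\<rceil> + 1"
  have N1: "N \<ge> 1" by (simp add: N_def)
  have D0: "0 < D" using C0 K0 c0 by (simp add: D_def)
  have xN: "x \<le> real N" unfolding N_def by linarith
  have x0: "0 < x" using D0 by (simp add: x_def)
  have "D + 1 = x powr d" using D0 d0 by (simp add: x_def powr_powr)
  also have "\<dots> \<le> real N powr d" using xN x0 d0 by (intro powr_mono2) auto
  finally have A: "D + 1 \<le> real N powr d" .
  have Npos: "0 < real N" using N1 by simp
  have "real N powr (1/r) * c powr (1/r) \<le> C * (real N powr (1/p) * K powr (1/p))"
    using H[OF N1] Npos c0 K0 by (simp add: powr_mult)
  then have "real N powr (1/r) \<le> real N powr (1/p) * D"
    using c0 by (simp add: D_def field_simps)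
  then have "real N powr (1/r) / real N powr (1/p) \<le> D"
    using Npos by (simp add: divide_le_eq mult.commute)
  moreover have "real N powr (1/r) / real N powr (1/p) = real N powr d"
    by (simp add: d_def powr_diff)
  ultimately show False using A by simp
qed

lemma epow_lower:
  assumes "ennreal V \<le> R" "0 \<le> V" "0 \<le> r"
  shows "ennreal (V powr r) \<le> epow R r"
proof (cases "R = \<infinity>")
  case True then show ?thesis by (simp add: epow_def)
next
  case False
  have "enn2real (ennreal V) \<le> enn2real R"
    by (rule enn2real_mono) (use assms False in \<open>auto simp: top.not_eq_extremum\<close>)
  then have "V \<le> enn2real R" using assms by simp
  then have "V powr r \<le> enn2real R powr r" using assms by (intro powr_mono2) auto
  then show ?thesis using False by (simp add: epow_def ennreal_leI)
qed

lemma V_eq_aux: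
  fixes l s B :: real and k :: nat
  assumes l0: "0 < l"
  shows "l powr (-s) / 2 * (2 * (l / (real k * B)))^k = (1/2 * (2/(real k*B))^k) * l powr (real k - s)"
proof -
  have "(2 * (l / (real k * B)))^k = (2/(real k*B))^k * l^k"
    by (simp add: power_mult_distrib[symmetric])
  moreover have "l^k = l powr (real k)" using l0 by (simp add: powr_realpow)
  moreover have "l powr (real k - s) = l powr (real k) * l powr (-s)"
    using l0 by (simp add: powr_add[symmetric])
  ultimately show ?thesis by simp
qed

lemma rearrange_aux:
  fixes l c0 r e1 b1 mm M1 M2 P X :: real
  assumes l0: "0 < l"
  shows "(c0 * M1 * M2 * P * X * X) * l powr (e1 + b1 + mm)
     = (c0 * l powr e1) * ((M1 * l powr b1) * M2 * (P * l powr mm) * X * X)"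
  using l0 by (simp add: powr_add mult_ac)

lemma A4_aux:
  fixes h l :: real and m kk :: nat
  assumes l0: "0 < l" and h1: "4 * l \<le> h" and sh: "h \<le> sinh h" and ch: "1 \<le> cosh h"
  shows "4^m * l powr (real m) \<le> cosh h ^ kk * sinh h ^ m"
proof -
  have "4^m * l powr (real m) = (4*l)^m" using l0 by (simp add: powr_realpow power_mult_distrib)
  also have "\<dots> \<le> sinh h ^ m" using sh h1 l0 by (intro power_mono) auto
  also have "\<dots> \<le> cosh h ^ kk * sinh h ^ m"
  proof -
    have "1 \<le> cosh h ^ kk" using ch by (rule one_le_power)
    moreover have "0 \<le> sinh h ^ m" using sh h1 l0 by simp
    ultimately show ?thesis using mult_right_mono[of 1 "cosh h ^ kk" "sinh h ^ m"] by simp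
  qed
  finally show ?thesis .
qed

lemma A2_aux:
  fixes h l b1 :: real
  assumes l0: "0 < l" and h1: "4 * l \<le> h" and h2: "h \<le> 5 * l" and s1: "h \<le> sinh h" and s2: "sinh h \<le> 2 * h"
  shows "min (4 powr b1) (10 powr b1) * l powr b1 \<le> sinh h powr b1"
proof -
  have "min ((4*l) powr b1) ((10*l) powr b1) \<le> sinh h powr b1"
    by (rule powr_between_ge) (use l0 h1 h2 s1 s2 in auto)
  moreover have "min ((4*l) powr b1) ((10*l) powr b1) = min (4 powr b1) (10 powr b1) * l powr b1"
    using l0 by (simp add: powr_mult min_mult_distrib_right)
  ultimately show ?thesis by simp
qed

lemma Xi_pt_lower:
  fixes G :: "real^'n::finite^'k::finite" and r s b1 b2 B :: real
  assumes r0: "0 < r" and g0: "g0 \<noteq> 0" and dt: "1/2 \<le> det (xi_gram g0 G)"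
    and ng: "norm g0 \<le> B" and nG: "norm G \<le> B" and B1: "1 \<le> B"
    and jN: "j < N" and h1: "4 * lam j \<le> h" and h2: "h \<le> 5 * lam j"
    and kn: "CARD('k) \<le> CARD('n) - 1"
  defines "E0 \<equiv> (1/2 * (2/(real CARD('k)*B))^CARD('k)) powr r * min (4 powr b1) (10 powr b1)
      * min 1 (2 powr b2) * 4^(CARD('n) - CARD('k) - 1) * exp (-B\<^sup>2/2) * exp (-B\<^sup>2/2)"
  shows "ennreal (E0 * lam j powr (r * (real CARD('k) - s) + b1 + (real CARD('n) - real CARD('k) - 1)))
     \<le> epow (Radon_k (ftest s N) h g0 G) r * ennreal (sinh h powr b1 * cosh h powr b2 * Xi_density TYPE('k) (h, g0, G))"
proof -
  define l where "l = lam j"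
  define k where "k = CARD('k)"
  define m where "m = CARD('n) - CARD('k) - 1"
  have l0: "0 < l" unfolding l_def by (rule lam_pos)
  have l1: "l \<le> 1/8" unfolding l_def by (rule lam_le)
  have h1': "4 * l \<le> h" and h2': "h \<le> 5 * l" using h1 h2 by (simp_all add: l_def)
  have hp: "0 \<le> h" "h \<le> 1" using h1' h2' l0 l1 by auto
  note sc = sinh_cosh_small[OF hp]
  have h0: "0 < h" using h1' l0 by simp
  define c0 where "c0 = 1/2 * (2/(real k*B))^k"
  have c0p: "0 < c0" using B1 by (simp add: c0_def k_def)
  define V where "V = l powr (-s) / 2 * (2 * (l / (real k * B)))^k"
  have V_eq: "V = c0 * l powr (real k - s)"
    unfolding V_def c0_def by (rule V_eq_aux[OF l0])
  have V0: "0 \<le> V" using c0p l0 by (simp add: V_eq)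
  have R: "ennreal V \<le> Radon_k (ftest s N) h g0 G"
    unfolding V_def l_def k_def by (rule R_lower[OF g0 dt nG B1 jN h1 h2])
  have A1: "ennreal (c0 powr r * l powr (r * (real k - s))) \<le> epow (Radon_k (ftest s N) h g0 G) r"
  proof -
    have "V powr r = c0 powr r * l powr (r * (real k - s))"
      using c0p l0 unfolding V_eq by (simp add: powr_mult powr_powr mult.commute)
    moreover have "ennreal (V powr r) \<le> epow (Radon_k (ftest s N) h g0 G) r"
      by (rule epow_lower[OF R V0]) (use r0 in simp)
    ultimately show ?thesis by simp
  qed
  have A2: "min (4 powr b1) (10 powr b1) * l powr b1 \<le> sinh h powr b1"
    by (rule A2_aux[OF l0 h1' h2' sc(1) sc(2)])
  have A3: "min 1 (2 powr b2) \<le> cosh h powr b2"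
    using powr_between_ge[of 1 "cosh h" 2 b2] sc(5) cosh_real_ge_1[of h] by simp
  have A4: "4^m * l powr (real m) \<le> cosh h ^ CARD('k) * sinh h ^ m"
    by (rule A4_aux[OF l0 h1' sc(1) cosh_real_ge_1])
  have ex1: "exp (-B\<^sup>2/2) \<le> exp (-(norm g0)\<^sup>2/2)"
    using power_mono[OF ng norm_ge_zero, of 2] by simp
  have ex2: "exp (-B\<^sup>2/2) \<le> exp (-(norm G)\<^sup>2/2)"
    using power_mono[OF nG norm_ge_zero, of 2] by simp
  have XD: "Xi_density TYPE('k) (h, g0, G) = cosh h ^ CARD('k) * sinh h ^ m
      * exp (-(norm g0)\<^sup>2/2) * exp (-(norm G)\<^sup>2/2)"
    using h0 by (simp add: Xi_density_def m_def)
  have pos1: "0 \<le> min (4 powr b1) (10 powr b1) * l powr b1" by simp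
  have pos2: "0 \<le> min 1 (2 powr b2)" by simp
  have pos3: "0 \<le> 4^m * l powr (real m)" by simp
  have W: "(min (4 powr b1) (10 powr b1) * l powr b1) * min 1 (2 powr b2) * (4^m * l powr (real m))
       * exp (-B\<^sup>2/2) * exp (-B\<^sup>2/2)
     \<le> sinh h powr b1 * cosh h powr b2 * (cosh h ^ CARD('k) * sinh h ^ m)
       * exp (-(norm g0)\<^sup>2/2) * exp (-(norm G)\<^sup>2/2)"
    by (intro mult_mono A2 A3 A4 ex1 ex2 pos1 pos2 pos3 mult_nonneg_nonneg) (use sc h0 in auto)
  then have W': "(min (4 powr b1) (10 powr b1) * l powr b1) * min 1 (2 powr b2) * (4^m * l powr (real m))
       * exp (-B\<^sup>2/2) * exp (-B\<^sup>2/2)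
     \<le> sinh h powr b1 * cosh h powr b2 * Xi_density TYPE('k) (h, g0, G)"
    unfolding XD by (simp add: mult.assoc)
  have n1: "0 < CARD('n)" by simp
  have "m + CARD('k) + 1 = CARD('n)" unfolding m_def using kn n1 by arith
  then have "real (m + CARD('k) + 1) = real CARD('n)" by simp
  then have rm: "real m = real CARD('n) - real CARD('k) - 1" by simp
  have rm': "real CARD('n) - real k - 1 = real m" using rm by (simp add: k_def)
  have E0e: "E0 = c0 powr r * min (4 powr b1) (10 powr b1) * min 1 (2 powr b2) * 4^m * exp (-B\<^sup>2/2) * exp (-B\<^sup>2/2)"
    by (simp add: E0_def c0_def k_def m_def)
  have "E0 * lam j powr (r * (real CARD('k) - s) + b1 + (real CARD('n) - real CARD('k) - 1))
     = (c0 powr r * l powr (r * (real k - s))) *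
       ((min (4 powr b1) (10 powr b1) * l powr b1) * min 1 (2 powr b2) * (4^m * l powr (real m))
       * exp (-B\<^sup>2/2) * exp (-B\<^sup>2/2))"
    unfolding E0e l_def[symmetric] k_def[symmetric] rm' by (rule rearrange_aux[OF l0])
  also have "ennreal \<dots> = ennreal (c0 powr r * l powr (r * (real k - s))) *
       ennreal ((min (4 powr b1) (10 powr b1) * l powr b1) * min 1 (2 powr b2) * (4^m * l powr (real m))
       * exp (-B\<^sup>2/2) * exp (-B\<^sup>2/2))"
    by (rule ennreal_mult) simp_all
  also have "\<dots> \<le> epow (Radon_k (ftest s N) h g0 G) r * ennreal (sinh h powr b1 * cosh h powr b2 * Xi_density TYPE('k) (h, g0, G))"
    by (intro mult_mono A1 ennreal_leI W') auto
  finally show ?thesis .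
qed

lemma Xi_lower:
  fixes a b :: "(real^'n::finite) \<times> (real^'n^'k::finite)" and r s b1 b2 B E0 :: real
  assumes r0: "0 < r" and B1: "1 \<le> B"
    and Q: "\<And>q. q \<in> box a b \<Longrightarrow> fst q \<noteq> 0 \<and> 1/2 \<le> det (xi_gram (fst q) (snd q)) \<and> norm (fst q) \<le> B \<and> norm (snd q) \<le> B"
    and kn: "CARD('k) \<le> CARD('n) - 1"
    and ex: "r * (real CARD('k) - s) + b1 + (real CARD('n) - real CARD('k) - 1) = -1"
  defines "E0 \<equiv> (1/2 * (2/(real CARD('k)*B))^CARD('k)) powr r * min (4 powr b1) (10 powr b1)
      * min 1 (2 powr b2) * 4^(CARD('n) - CARD('k) - 1) * exp (-B\<^sup>2/2) * exp (-B\<^sup>2/2)"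
  shows "of_nat N * ennreal (E0 * enn2real (emeasure lborel (box a b)))
     \<le> Xi_weighted_pow r b1 b2 (\<lambda>h g0 (G :: real^'n^'k). Radon_k (ftest s N) h g0 G)"
proof -
  define S :: "nat \<Rightarrow> (real \<times> (real^'n) \<times> (real^'n^'k)) set" where
    "S j = {4 * lam j .. 5 * lam j} \<times> box a b" for j
  have Sdisj: "i = j" if "x \<in> S i" "x \<in> S j" for x i j
  proof (rule ccontr)
    assume ne: "i \<noteq> j"
    have h: "4 * lam i \<le> fst x" "fst x \<le> 5 * lam i" "4 * lam j \<le> fst x" "fst x \<le> 5 * lam j"
      using that by (auto simp: S_def)
    show False
    proof (cases "i < j")
      case True
      then show False using lam_less[OF True] lam_pos[of i] h by linarith
    next
      case False
      then have "j < i" using ne by simp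
      then show False using lam_less[of j i] lam_pos[of j] h by linarith
    qed
  qed
  define F where "F \<xi> = (case \<xi> of (h, g0, G) \<Rightarrow>
          epow (Radon_k (ftest s N) h g0 G) r * ennreal (sinh h powr b1 * cosh h powr b2
             * Xi_density TYPE('k) (h, g0, G)))" for \<xi> :: "real \<times> (real^'n) \<times> (real^'n^'k)"
  have pw: "(\<Sum>j<N. ennreal (E0 * lam j powr (-1)) * indicator (S j) \<xi>) \<le> F \<xi>" for \<xi>
  proof (cases "\<exists>j<N. \<xi> \<in> S j")
    case True
    then obtain j where j: "j < N" "\<xi> \<in> S j" by blast
    obtain h g0 G where xi: "\<xi> = (h, g0, G)" by (cases \<xi>) auto
    have "(\<Sum>i<N. ennreal (E0 * lam i powr (-1)) * indicator (S i) \<xi>) =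
          (\<Sum>i<N. if i = j then ennreal (E0 * lam j powr (-1)) else 0)"
    proof (rule sum.cong[OF refl])
      fix i assume "i \<in> {..<N}"
      show "ennreal (E0 * lam i powr (-1)) * indicator (S i) \<xi> = (if i = j then ennreal (E0 * lam j powr (-1)) else 0)"
      proof (cases "i = j")
        case True
        then show ?thesis using j by simp
      next
        case False
        then have "\<xi> \<notin> S i" using j(2) Sdisj[of \<xi> i j] by blast
        then show ?thesis using False by simp
      qed
    qed
    also have "\<dots> = ennreal (E0 * lam j powr (-1))" using j by simp
    also have "\<dots> \<le> F \<xi>"
    proof -
      have hq: "4 * lam j \<le> h" "h \<le> 5 * lam j" "(g0, G) \<in> box a b" using j xi by (auto simp: S_def)
      have q: "g0 \<noteq> 0" "1/2 \<le> det (xi_gram g0 G)" "norm g0 \<le> B" "norm G \<le> B"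
        using Q[OF hq(3)] by auto
      have L: "ennreal (E0 * lam j powr (r * (real CARD('k) - s) + b1 + (real CARD('n) - real CARD('k) - 1)))
        \<le> epow (Radon_k (ftest s N) h g0 G) r * ennreal (sinh h powr b1 * cosh h powr b2 * Xi_density TYPE('k) (h, g0, G))"
        unfolding E0_def by (rule Xi_pt_lower[OF r0 q B1 j(1) hq(1) hq(2) kn])
      have "F \<xi> = epow (Radon_k (ftest s N) h g0 G) r * ennreal (sinh h powr b1 * cosh h powr b2 * Xi_density TYPE('k) (h, g0, G))"
        by (simp add: F_def xi)
      then show ?thesis using L unfolding ex by simp
    qed
    finally show ?thesis .
  next
    case False
    then have "(\<Sum>j<N. ennreal (E0 * lam j powr (-1)) * indicator (S j) \<xi>) = 0"
      by (intro sum.neutral) (auto simp: indicator_def)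
    then show ?thesis by simp
  qed
  define mq where "mq = enn2real (emeasure lborel (box a b))"
  have mq: "emeasure lborel (box a b) = ennreal mq"
    unfolding mq_def using emeasure_lborel_box_finite[of a b]
    by (simp add: ennreal_enn2real_if)
  have meas: "emeasure lborel (S j) = ennreal (lam j) * ennreal mq" for j
  proof -
    have "emeasure (lborel :: (real \<times> (real^'n) \<times> (real^'n^'k)) measure) (S j)
        = emeasure (lborel \<Otimes>\<^sub>M lborel) ({4 * lam j .. 5 * lam j} \<times> box a b)"
      by (simp add: S_def lborel_prod)
    also have "\<dots> = emeasure lborel {4 * lam j .. 5 * lam j} * emeasure lborel (box a b)"
      by (rule lborel.emeasure_pair_measure_Times) auto
    also have "\<dots> = ennreal (lam j) * ennreal mq"
      using lam_pos[of j] by (simp add: mq)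
    finally show ?thesis .
  qed
  have Sm[measurable]: "S j \<in> sets lborel" for j
    unfolding S_def sets_lborel by (intro borel_Times borel_closed borel_open) auto
  have "of_nat N * ennreal (E0 * mq) = (\<Sum>j<N. ennreal (E0 * mq))" by simp
  also have "\<dots> = (\<Sum>j<N. ennreal (E0 * lam j powr (-1)) * emeasure lborel (S j))"
  proof (rule sum.cong[OF refl])
    fix j
    have l0: "0 < lam j" by (rule lam_pos)
    have E0: "0 \<le> E0" unfolding E0_def by simp
    have mq0: "0 \<le> mq" by (simp add: mq_def)
    have "E0 * lam j powr (-1) * (lam j * mq) = E0 * mq"
      using l0 by (simp add: powr_minus field_simps)
    then show "ennreal (E0 * mq) = ennreal (E0 * lam j powr (-1)) * emeasure lborel (S j)"
      unfolding meas using l0 E0 mq0 by (simp add: ennreal_mult[symmetric] mult.assoc)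
  qed
  also have "\<dots> = (\<Sum>j<N. \<integral>\<^sup>+ \<xi>. ennreal (E0 * lam j powr (-1)) * indicator (S j) \<xi> \<partial>lborel)"
    by (intro sum.cong refl nn_integral_cmult_indicator[symmetric] Sm)
  also have "\<dots> = (\<integral>\<^sup>+ \<xi>. (\<Sum>j<N. ennreal (E0 * lam j powr (-1)) * indicator (S j) \<xi>) \<partial>lborel)"
    by (rule nn_integral_sum[symmetric]) measurable
  also have "\<dots> \<le> (\<integral>\<^sup>+ \<xi>. F \<xi> \<partial>lborel)"
    by (rule nn_integral_mono) (rule pw)
  also have "\<dots> = Xi_weighted_pow r b1 b2 (\<lambda>h g0 (G :: real^'n^'k). Radon_k (ftest s N) h g0 G)"
    unfolding Xi_weighted_pow_def F_def by simp
  finally show ?thesis by (simp add: mq_def)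
qed

lemma epow_upper:
  assumes "L \<le> ennreal v" "0 \<le> v" "0 \<le> a"
  shows "epow L a \<le> ennreal (v powr a)"
proof -
  have Lf: "L \<noteq> \<infinity>" using assms(1) by (auto simp: top_unique)
  have "enn2real L \<le> enn2real (ennreal v)"
    by (rule enn2real_mono) (use assms(1) in auto)
  then have "enn2real L \<le> v" using assms(2) by simp
  then have "enn2real L powr a \<le> v powr a" using assms(3) by (intro powr_mono2) auto
  then show ?thesis using Lf by (simp add: epow_def ennreal_leI)
qed

lemma epow_lower_real:
  assumes "ennreal v \<le> X" "0 \<le> v" "0 \<le> a" "epow X a \<le> ennreal w" "0 \<le> w"
  shows "v powr a \<le> w"
proof -
  have "ennreal (v powr a) \<le> ennreal w" using epow_lower[OF assms(1,2,3)] assms(4) by simp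
  then show ?thesis using assms(5) by (simp add: ennreal_le_iff)
qed

theorem corollary8p3:
  fixes p r a1 a2 b1 b2 :: real
  assumes n2: "CARD('n::finite) \<ge> 2"
    and kn: "CARD('k::finite) \<le> CARD('n) - 1"
    and a: "a1 + a2 > real CARD('k) - real CARD('n)"
    and p1: "1 \<le> p"
    and p2: "CARD('k) = 1 \<or> p < (a1 + a2 + real CARD('n) - 1) / (real CARD('k) - 1)"
    and r1: "1 \<le> r"
    and b_le: "(b2 + real CARD('k) - 1) / r - (a2 - 1) / p
                 \<le> (a1 + real CARD('n)) / p - (b1 + real CARD('n) - real CARD('k)) / r"
    and b_eq: "(a1 + real CARD('n)) / p - (b1 + real CARD('n) - real CARD('k)) / r = real CARD('k)"
    and bdd: "Radon_bounded TYPE('k) TYPE('n) p a1 a2 r b1 b2"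
  shows "r \<ge> p"
proof (rule ccontr)
  assume "\<not> r \<ge> p"
  then have rp: "r < p" by simp
  have r0: "0 < r" and p0: "0 < p" using r1 p1 by auto
  have kn': "CARD('k) < CARD('n)" using n2 kn by linarith
  define s where "s = (a1 + real CARD('n)) / p"
  have sp: "s * p = a1 + real CARD('n)" using p0 by (simp add: s_def)
  have ex: "r * (real CARD('k) - s) + b1 + (real CARD('n) - real CARD('k) - 1) = -1"
  proof -
    have "s - (b1 + real CARD('n) - real CARD('k)) / r = real CARD('k)" using b_eq by (simp add: s_def)
    then have "r * s - (b1 + real CARD('n) - real CARD('k)) = r * real CARD('k)"
      using r0 by (simp add: field_simps)
    then show ?thesis by (simp add: algebra_simps)
  qed
  obtain qa qb :: "(real^'n) \<times> (real^'n^'k)" and B :: real where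
    Qne: "box qa qb \<noteq> {}" and B1: "B \<ge> 1" and
    Q: "\<And>q. q \<in> box qa qb \<Longrightarrow> fst q \<noteq> 0 \<and> 1/2 \<le> det (xi_gram (fst q) (snd q)) \<and> norm (fst q) \<le> B \<and> norm (snd q) \<le> B"
    using good_box[OF kn'] by blast
  define mq where "mq = enn2real (emeasure lborel (box qa qb))"
  have mq0: "0 < mq" using box_pos_measure[OF Qne] by (simp add: mq_def enn2real_positive_iff)
  define E0 where "E0 = (1/2 * (2/(real CARD('k)*B))^CARD('k)) powr r * min (4 powr b1) (10 powr b1)
      * min 1 (2 powr b2) * 4^(CARD('n) - CARD('k) - 1) * exp (-B\<^sup>2/2) * exp (-B\<^sup>2/2)"
  have E00: "0 < E0" unfolding E0_def using B1 by simp
  define c where "c = E0 * mq"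
  have c0: "0 < c" using E00 mq0 by (simp add: c_def)
  define K where "K = (2 powr a1 + 12 powr a1) * (1 + 2 powr a2) * 3^CARD('n) * 8^CARD('n)"
  have K0: "0 < K" unfolding K_def by (intro mult_pos_pos add_pos_pos) auto
  obtain C where C0: "C > 0" and H: "\<And>f :: real^'n \<Rightarrow> real. f \<in> borel_measurable borel \<Longrightarrow> (\<forall>x. f x \<ge> 0) \<Longrightarrow>
        epow (Xi_weighted_pow r b1 b2 (\<lambda>h g0 (G :: real^'n^'k). Radon_k f h g0 G)) (1 / r)
          \<le> ennreal C * epow (Lp_weighted_pow p a1 a2 f) (1 / p)"
    using bdd unfolding Radon_bounded_def by blast
  have G: "(real N * c) powr (1/r) \<le> C * (real N * K) powr (1/p)" if "N \<ge> 1" for N :: nat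
  proof -
    define f :: "real^'n \<Rightarrow> real" where "f = ftest s N"
    have eN: "ennreal (real N * x) = of_nat N * ennreal x" if "0 \<le> x" for x
    proof -
      have "ennreal (real N * x) = ennreal (real N) * ennreal x" by (rule ennreal_mult) (use that in auto)
      then show ?thesis by (simp add: ennreal_of_nat_eq_real_of_nat)
    qed
    have L0: "Lp_weighted_pow p a1 a2 f \<le> of_nat N * ennreal K"
      unfolding f_def K_def by (rule Lp_ftest[OF p0 sp])
    have L: "Lp_weighted_pow p a1 a2 f \<le> ennreal (real N * K)"
      using L0 eN[OF less_imp_le[OF K0]] by simp
    have X0: "of_nat N * ennreal c \<le> Xi_weighted_pow r b1 b2 (\<lambda>h g0 (G :: real^'n^'k). Radon_k f h g0 G)"
      unfolding f_def c_def E0_def mq_def by (rule Xi_lower[OF r0 B1 Q kn ex])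
    have X: "ennreal (real N * c) \<le> Xi_weighted_pow r b1 b2 (\<lambda>h g0 (G :: real^'n^'k). Radon_k f h g0 G)"
      using X0 eN[OF less_imp_le[OF c0]] by simp
    have "epow (Xi_weighted_pow r b1 b2 (\<lambda>h g0 (G :: real^'n^'k). Radon_k f h g0 G)) (1 / r)
          \<le> ennreal C * epow (Lp_weighted_pow p a1 a2 f) (1 / p)"
      by (rule H) (auto simp: f_def ftest_measurable ftest_nonneg)
    also have "\<dots> \<le> ennreal C * ennreal ((real N * K) powr (1/p))"
      by (intro mult_left_mono epow_upper[OF L]) (use K0 p0 in auto)
    also have "\<dots> = ennreal (C * (real N * K) powr (1/p))"
      using C0 by (simp add: ennreal_mult)
    finally have E: "epow (Xi_weighted_pow r b1 b2 (\<lambda>h g0 (G :: real^'n^'k). Radon_k f h g0 G)) (1 / r)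
       \<le> ennreal (C * (real N * K) powr (1/p))" .
    show ?thesis
      by (rule epow_lower_real[OF X _ _ E]) (use c0 r0 C0 in auto)
  qed
  show False by (rule growth_contra[OF r0 rp c0 K0 C0 G])
qed

end
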